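(* Let $\Gamma$ be a group. Then for every $j \ge 1$ the nilpotent quotients $P\mathcal{N}i(\Gamma)/\overline{C^j}(P\mathcal{N}i(\Gamma))$ and $\Gamma/C^j(\Gamma)$ are isomorphic, and the topology of $P\mathcal{N}i(\Gamma)$ can be defined by a metric.
   Context: For a group $\Gamma$, let $\mathcal{N}i$ be the family of all normal subgroups $N$ of $\Gamma$ with $\Gamma/N$ nilpotent (a directed family). Let $\mathcal{C}=\bigcap_{N\in\mathcal{N}i}N$; the group $\Gamma/\mathcal{C}$ carries the Hausdorff group topology for which the images of the members of $\mathcal{N}i$ form a basis of neighbourhoods of the identity, and its completion (with respect to the left uniformity) is the true pronilpotent completion $P\mathcal{N}i(\Gamma)$, identifiable with the inverse limit $\varprojlim_{N\in\mathcal{N}i}\Gamma/N$. The lower central series is $C^1(\Gamma)=\Gamma$, $C^{j+1}(\Gamma)=[\Gamma,C^j(\Gamma)]$. For a topological group $G$, $\overline{C^1}(G)=G$ and $\overline{C^{j+1}}(G)$ is the closure of the subgroup generated by commutators $[g,c]$ with $g\in G$, $c\in\overline{C^j}(G)$. *)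

theory Defs
  imports "HOL-Analysis.Analysis" "HOL-Algebra.Algebra"
begin

definition commutator :: "('a, 'b) monoid_scheme \<Rightarrow> 'a \<Rightarrow> 'a \<Rightarrow> 'a" where
  "commutator G x y = x \<otimes>\<^bsub>G\<^esub> y \<otimes>\<^bsub>G\<^esub> inv\<^bsub>G\<^esub> x \<otimes>\<^bsub>G\<^esub> inv\<^bsub>G\<^esub> y"

definition commutators :: "('a, 'b) monoid_scheme \<Rightarrow> 'a set \<Rightarrow> 'a set \<Rightarrow> 'a set" where
  "commutators G A B = {commutator G g c | g c. g \<in> A \<and> c \<in> B}"

text \<open>Lower central series, indexed from 1: C^1 = G, C^(j+1) = [G, C^j].
  (Index 0 is a dummy convention, also = G.)\<close>
fun lower_central :: "('a, 'b) monoid_scheme \<Rightarrow> nat \<Rightarrow> 'a set" where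
  "lower_central G 0 = carrier G"
| "lower_central G (Suc 0) = carrier G"
| "lower_central G (Suc (Suc n)) =
     generate G (commutators G (carrier G) (lower_central G (Suc n)))"

fun closed_lower_central ::
  "('a, 'b) monoid_scheme \<Rightarrow> 'a topology \<Rightarrow> nat \<Rightarrow> 'a set" where
  "closed_lower_central G T 0 = carrier G"
| "closed_lower_central G T (Suc 0) = carrier G"
| "closed_lower_central G T (Suc (Suc n)) =
     T closure_of (generate G (commutators G (carrier G) (closed_lower_central G T (Suc n))))"

definition nilpotent_group :: "('a, 'b) monoid_scheme \<Rightarrow> bool" where
  "nilpotent_group G \<longleftrightarrow> group G \<and> (\<exists>n. lower_central G n = {\<one>\<^bsub>G\<^esub>})"

definition Ni :: "('a, 'b) monoid_scheme \<Rightarrow> 'a set set" where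
  "Ni G = {N. N \<lhd> G \<and> nilpotent_group (G Mod N)}"

text \<open>The pronilpotent completion, realised as the inverse limit of the G/N, N in Ni:
  compatible families of cosets (the projection G/M \<rightarrow> G/N for M \<subseteq> N sends
  a coset of M to the unique coset of N containing it), with pointwise multiplication.\<close>
definition PNi :: "('a, 'b) monoid_scheme \<Rightarrow> ('a set \<Rightarrow> 'a set) monoid" where
  "PNi G = \<lparr> carrier = {x \<in> (\<Pi>\<^sub>E N\<in>Ni G. rcosets\<^bsub>G\<^esub> N).
                         \<forall>M\<in>Ni G. \<forall>N\<in>Ni G. M \<subseteq> N \<longrightarrow> x M \<subseteq> x N},
             mult = (\<lambda>x y. \<lambda>N\<in>Ni G. x N <#>\<^bsub>G\<^esub> y N),
             one = (\<lambda>N\<in>Ni G. N) \<rparr>"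

definition PNi_topology :: "('a, 'b) monoid_scheme \<Rightarrow> ('a set \<Rightarrow> 'a set) topology" where
  "PNi_topology G = subtopology
     (product_topology (\<lambda>N. discrete_topology (rcosets\<^bsub>G\<^esub> N)) (Ni G))
     (carrier (PNi G))"

end

theory Submission
  imports Defs
begin


lemma (in group) commutator_closed [simp]:
  "x \<in> carrier G \<Longrightarrow> y \<in> carrier G \<Longrightarrow> commutator G x y \<in> carrier G"
  by (simp add: commutator_def)

lemma (in group) commutators_subset:
  "A \<subseteq> carrier G \<Longrightarrow> B \<subseteq> carrier G \<Longrightarrow> commutators G A B \<subseteq> carrier G"
  unfolding commutators_def by (auto intro!: commutator_closed)

lemma hom_commutator:
  assumes "group_hom G H h" "x \<in> carrier G" "y \<in> carrier G"
  shows "h (commutator G x y) = commutator H (h x) (h y)"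
proof -
  interpret group_hom G H h by fact
  show ?thesis using assms(2,3) by (simp add: commutator_def)
qed

lemma hom_commutators:
  assumes "group_hom G H h" "A \<subseteq> carrier G" "B \<subseteq> carrier G"
  shows "h ` commutators G A B = commutators H (h ` A) (h ` B)"
proof
  show "h ` commutators G A B \<subseteq> commutators H (h ` A) (h ` B)"
  proof
    fix z assume "z \<in> h ` commutators G A B"
    then obtain g c where "g \<in> A" "c \<in> B" "z = h (commutator G g c)"
      unfolding commutators_def by blast
    then show "z \<in> commutators H (h ` A) (h ` B)"
      using hom_commutator[OF assms(1), of g c] assms(2,3) unfolding commutators_def by blast
  qed
next
  show "commutators H (h ` A) (h ` B) \<subseteq> h ` commutators G A B"
  proof
    fix z assume "z \<in> commutators H (h ` A) (h ` B)"
    then obtain g c where "g \<in> A" "c \<in> B" "z = commutator H (h g) (h c)"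
      unfolding commutators_def by blast
    moreover have "commutator G g c \<in> commutators G A B"
      using \<open>g \<in> A\<close> \<open>c \<in> B\<close> unfolding commutators_def by blast
    ultimately show "z \<in> h ` commutators G A B"
      using hom_commutator[OF assms(1), of g c] assms(2,3) by (metis rev_image_eqI subsetD)
  qed
qed

lemma (in group) inv_cancel_aux [simp]:
  "x \<in> carrier G \<Longrightarrow> y \<in> carrier G \<Longrightarrow> inv x \<otimes> (x \<otimes> y) = y"
  "x \<in> carrier G \<Longrightarrow> y \<in> carrier G \<Longrightarrow> x \<otimes> (inv x \<otimes> y) = y"
  by (simp_all add: m_assoc[symmetric])

lemma (in group) lc_Suc_Suc:
  "lower_central G (Suc (Suc n)) = generate G (commutators G (carrier G) (lower_central G (Suc n)))"
  by simp

lemma (in group) lc_normal_Suc: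
  "lower_central G (Suc n) \<lhd> G"
proof (induction n)
  case 0 show ?case using normal_self by simp
next
  case (Suc n)
  interpret N: normal "lower_central G (Suc n)" G by fact
  have sub: "commutators G (carrier G) (lower_central G (Suc n)) \<subseteq> carrier G"
    using N.subset commutators_subset by blast
  show ?case unfolding lc_Suc_Suc
  proof (rule normal_generateI[OF sub])
    fix h g assume h: "h \<in> commutators G (carrier G) (lower_central G (Suc n))" and g: "g \<in> carrier G"
    then obtain a c where ac: "a \<in> carrier G" "c \<in> lower_central G (Suc n)" "h = commutator G a c"
      by (auto simp: commutators_def)
    have cc: "c \<in> carrier G" using ac N.subset by auto
    have "g \<otimes> h \<otimes> inv g = commutator G (g \<otimes> a \<otimes> inv g) (g \<otimes> c \<otimes> inv g)"
      unfolding ac(3) commutator_def using g ac(1) cc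
      by (simp add: m_assoc inv_mult_group)
    moreover have "g \<otimes> c \<otimes> inv g \<in> lower_central G (Suc n)"
      using N.inv_op_closed2[OF g ac(2)] .
    ultimately show "g \<otimes> h \<otimes> inv g \<in> commutators G (carrier G) (lower_central G (Suc n))"
      using g ac(1) unfolding commutators_def by blast
  qed
qed

lemma (in group) lc_normal: "lower_central G n \<lhd> G"
  using lc_normal_Suc[of "n - 1"] normal_self by (cases n) auto

lemma (in group) lc_Suc_subset: "lower_central G (Suc n) \<subseteq> lower_central G n"
proof (cases n)
  case 0 then show ?thesis by simp
next
  case (Suc k)
  interpret N: normal "lower_central G (Suc k)" G by (rule lc_normal)
  have "commutators G (carrier G) (lower_central G (Suc k)) \<subseteq> lower_central G (Suc k)"
  proof
    fix z assume "z \<in> commutators G (carrier G) (lower_central G (Suc k))"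
    then obtain a c where ac: "a \<in> carrier G" "c \<in> lower_central G (Suc k)" "z = commutator G a c"
      by (auto simp: commutators_def)
    have cc: "c \<in> carrier G" using ac N.subset by auto
    have "z = (a \<otimes> c \<otimes> inv a) \<otimes> inv c" using ac cc by (simp add: commutator_def)
    then show "z \<in> lower_central G (Suc k)"
      using N.inv_op_closed2[OF ac(1) ac(2)] ac(2) by (simp add: N.m_closed N.m_inv_closed)
  qed
  then show ?thesis unfolding Suc lc_Suc_Suc
    using generate_subgroup_incl N.subgroup_axioms by blast
qed

lemma (in group) lc_antimono: "m \<le> n \<Longrightarrow> lower_central G n \<subseteq> lower_central G m"
proof (induction n rule: dec_induct)
  case base then show ?case by simp
next
  case (step n) then show ?case using lc_Suc_subset[of n] by blast
qed

lemma (in group) lc_hom_image: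
  assumes "group_hom G H h" "h ` carrier G = carrier H"
  shows "h ` lower_central G n = lower_central H n"
proof (induction n rule: nat_less_induct)
  case (1 n)
  interpret gh: group_hom G H h by fact
  show ?case
  proof (cases n)
    case 0 then show ?thesis using assms(2) by simp
  next
    case (Suc k) note nk = Suc
    show ?thesis
    proof (cases k)
      case 0 then show ?thesis using assms(2) nk by simp
    next
      case (Suc l)
      have sub: "lower_central G (Suc l) \<subseteq> carrier G" using normal.axioms(1)[OF lc_normal] subgroup.subset by blast
      have csub: "commutators G (carrier G) (lower_central G (Suc l)) \<subseteq> carrier G"
        using commutators_subset sub by blast
      have "h ` lower_central G n = generate H (h ` commutators G (carrier G) (lower_central G (Suc l)))"
        unfolding nk Suc lc_Suc_Suc using gh.generate_img[OF csub] by simp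
      also have "\<dots> = generate H (commutators H (carrier H) (h ` lower_central G (Suc l)))"
        using hom_commutators[OF assms(1) _ sub] assms(2) by simp
      also have "h ` lower_central G (Suc l) = lower_central H (Suc l)"
        using 1 nk Suc by simp
      finally show ?thesis unfolding nk Suc by simp
    qed
  qed
qed



context group begin

lemma Ni_normal: "N \<in> Ni G \<Longrightarrow> N \<lhd> G"
  by (simp add: Ni_def)

lemma quot_hom: "N \<lhd> G \<Longrightarrow> group_hom G (G Mod N) (\<lambda>a. N #> a)"
  by (simp add: group_hom_def group_hom_axioms_def is_group normal.factorgroup_is_group
      normal.r_coset_hom_Mod)

lemma lc_quot: "N \<lhd> G \<Longrightarrow> lower_central (G Mod N) n = (\<lambda>a. N #> a) ` lower_central G n"
  using lc_hom_image[OF quot_hom, of N] carrier_FactGroup[of G N] by simp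

lemma Ni_contains_lc: assumes "N \<in> Ni G" shows "\<exists>c. lower_central G c \<subseteq> N"
proof -
  have nN: "N \<lhd> G" and nil: "nilpotent_group (G Mod N)" using assms by (auto simp: Ni_def)
  then obtain c where c: "lower_central (G Mod N) c = {N}"
    unfolding nilpotent_group_def by auto
  have "lower_central G c \<subseteq> N"
  proof
    fix x assume x: "x \<in> lower_central G c"
    have xc: "x \<in> carrier G"
      using x normal.axioms(1)[OF lc_normal] subgroup.subset by blast
    have "N #> x = N" using c lc_quot[OF nN, of c] x by auto
    then show "x \<in> N" using rcos_self[OF xc normal.axioms(1)[OF nN]] by simp
  qed
  then show ?thesis by blast
qed

lemma lc_in_Ni: "lower_central G n \<in> Ni G"
proof -
  let ?K = "lower_central G n"
  have nK: "?K \<lhd> G" by (rule lc_normal)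
  have sK: "subgroup ?K G" using nK normal.axioms(1) by blast
  have "(\<lambda>a. ?K #> a) ` ?K = {?K}"
  proof -
    have "\<And>a. a \<in> ?K \<Longrightarrow> ?K #> a = ?K"
      using coset_join2 sK subgroup.subset by blast
    moreover have "\<one> \<in> ?K" using sK subgroup.one_closed by blast
    ultimately show ?thesis by blast
  qed
  then have "lower_central (G Mod ?K) n = {\<one>\<^bsub>G Mod ?K\<^esub>}"
    using lc_quot[OF nK, of n] by simp
  then show ?thesis
    unfolding Ni_def nilpotent_group_def using nK normal.factorgroup_is_group by blast
qed

lemma Ni_finite_bound:
  assumes "finite F" "F \<subseteq> Ni G"
  shows "\<exists>m\<ge>j. \<forall>N\<in>F. lower_central G m \<subseteq> N"
  using assms
proof (induction F rule: finite_induct)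
  case empty then show ?case by blast
next
  case (insert N F)
  then obtain m where m: "m \<ge> j" "\<forall>M\<in>F. lower_central G m \<subseteq> M" by auto
  obtain c where c: "lower_central G c \<subseteq> N" using Ni_contains_lc insert.prems by blast
  have "\<forall>M\<in>insert N F. lower_central G (max m c) \<subseteq> M"
    using m(2) c lc_antimono[of m "max m c"] lc_antimono[of c "max m c"] by auto
  then show ?case using m(1) by (intro exI[of _ "max m c"]) auto
qed

lemma carrier_PNi: "carrier (PNi G) = {x \<in> (\<Pi>\<^sub>E N\<in>Ni G. rcosets N).
                         \<forall>M\<in>Ni G. \<forall>N\<in>Ni G. M \<subseteq> N \<longrightarrow> x M \<subseteq> x N}"
  by (simp add: PNi_def)

lemma mult_PNi: "x \<otimes>\<^bsub>PNi G\<^esub> y = (\<lambda>N\<in>Ni G. x N <#> y N)"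
  by (simp add: PNi_def)

lemma one_PNi: "\<one>\<^bsub>PNi G\<^esub> = (\<lambda>N\<in>Ni G. N)"
  by (simp add: PNi_def)

lemma PNi_rcos: "x \<in> carrier (PNi G) \<Longrightarrow> N \<in> Ni G \<Longrightarrow> x N \<in> rcosets N"
  by (auto simp: carrier_PNi)

lemma PNi_rep: "x \<in> carrier (PNi G) \<Longrightarrow> N \<in> Ni G \<Longrightarrow> \<exists>g\<in>carrier G. x N = N #> g"
  using PNi_rcos by (auto simp: RCOSETS_def)

lemma PNi_compat: "x \<in> carrier (PNi G) \<Longrightarrow> M \<in> Ni G \<Longrightarrow> N \<in> Ni G \<Longrightarrow> M \<subseteq> N \<Longrightarrow> x M \<subseteq> x N"
  by (auto simp: carrier_PNi)

lemma PNi_out: "x \<in> carrier (PNi G) \<Longrightarrow> N \<notin> Ni G \<Longrightarrow> x N = undefined"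
  by (auto simp: carrier_PNi PiE_def extensional_def)

lemma Ni_subgroup: "N \<in> Ni G \<Longrightarrow> subgroup N G"
  using Ni_normal normal.axioms(1) by blast

lemma PNi_det:
  assumes x: "x \<in> carrier (PNi G)" and M: "M \<in> Ni G" and N: "N \<in> Ni G" and MN: "M \<subseteq> N"
    and g: "g \<in> carrier G" and xM: "x M = M #> g"
  shows "x N = N #> g"
proof -
  have "g \<in> x N" using rcos_self[OF g Ni_subgroup[OF M]] xM PNi_compat[OF x M N MN] by auto
  moreover obtain h where h: "h \<in> carrier G" "x N = N #> h" using PNi_rep[OF x N] by blast
  ultimately show ?thesis using repr_independence[OF _ h(1) Ni_subgroup[OF N]] by simp
qed

lemma r_coset_mono: "M \<subseteq> N \<Longrightarrow> M #> g \<subseteq> N #> g"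
  by (auto simp: r_coset_def)

lemma PNi_group: "group (PNi G)"
proof (rule groupI)
  fix x y assume x: "x \<in> carrier (PNi G)" and y: "y \<in> carrier (PNi G)"
  show "x \<otimes>\<^bsub>PNi G\<^esub> y \<in> carrier (PNi G)"
    unfolding mult_PNi carrier_PNi
  proof (intro CollectI conjI ballI impI)
    show "(\<lambda>N\<in>Ni G. x N <#> y N) \<in> (\<Pi>\<^sub>E N\<in>Ni G. rcosets N)"
      using normal.setmult_closed[OF Ni_normal PNi_rcos[OF x] PNi_rcos[OF y]] by simp
    fix M N assume MN: "M \<in> Ni G" "N \<in> Ni G" "M \<subseteq> N"
    show "(\<lambda>N\<in>Ni G. x N <#> y N) M \<subseteq> (\<lambda>N\<in>Ni G. x N <#> y N) N"
      using PNi_compat[OF x MN] PNi_compat[OF y MN] MN unfolding set_mult_def by auto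
  qed
next
  show "\<one>\<^bsub>PNi G\<^esub> \<in> carrier (PNi G)"
    unfolding one_PNi carrier_PNi
    using Ni_subgroup subgroup.subgroup_in_rcosets is_group by auto
next
  fix x y z assume x: "x \<in> carrier (PNi G)" and y: "y \<in> carrier (PNi G)" and z: "z \<in> carrier (PNi G)"
  have c: "\<And>w N. w \<in> carrier (PNi G) \<Longrightarrow> N \<in> Ni G \<Longrightarrow> w N \<subseteq> carrier G"
    using PNi_rcos Ni_subgroup subgroup.rcosets_carrier is_group by blast
  have h: "\<And>N. N \<in> Ni G \<Longrightarrow> (x N <#> y N) <#> z N = x N <#> (y N <#> z N)"
    using set_mult_assoc[OF c[OF x] c[OF y] c[OF z]] by blast
  show "x \<otimes>\<^bsub>PNi G\<^esub> y \<otimes>\<^bsub>PNi G\<^esub> z = x \<otimes>\<^bsub>PNi G\<^esub> (y \<otimes>\<^bsub>PNi G\<^esub> z)"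
    unfolding mult_PNi by (rule ext) (simp add: h)
next
  fix x assume x: "x \<in> carrier (PNi G)"
  show "\<one>\<^bsub>PNi G\<^esub> \<otimes>\<^bsub>PNi G\<^esub> x = x"
  proof -
    have h: "\<And>N. N \<in> Ni G \<Longrightarrow> N <#> x N = x N"
      using normal.rcosets_mult_eq[OF Ni_normal PNi_rcos[OF x]] by blast
    show ?thesis unfolding mult_PNi one_PNi by (rule ext) (simp add: h PNi_out[OF x])
  qed
next
  fix x assume x: "x \<in> carrier (PNi G)"
  define y where "y = (\<lambda>N\<in>Ni G. set_inv (x N))"
  have yN: "N \<in> Ni G \<Longrightarrow> g \<in> carrier G \<Longrightarrow> x N = N #> g \<Longrightarrow> y N = N #> inv g" for N g
    unfolding y_def using normal.rcos_inv[OF Ni_normal] by simp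
  have "y \<in> carrier (PNi G)"
    unfolding carrier_PNi
  proof (intro CollectI conjI ballI impI)
    show "y \<in> (\<Pi>\<^sub>E N\<in>Ni G. rcosets N)"
      unfolding y_def using normal.setinv_closed[OF Ni_normal PNi_rcos[OF x]] by simp
    fix M N assume MN: "M \<in> Ni G" "N \<in> Ni G" "M \<subseteq> N"
    obtain g where g: "g \<in> carrier G" "x M = M #> g" using PNi_rep[OF x MN(1)] by blast
    have "x N = N #> g" using PNi_det[OF x MN g] .
    then show "y M \<subseteq> y N" using yN[OF MN(1) g] yN[OF MN(2) g(1)] r_coset_mono[OF MN(3)] by simp
  qed
  moreover have "y \<otimes>\<^bsub>PNi G\<^esub> x = \<one>\<^bsub>PNi G\<^esub>"
  proof -
    have h: "\<And>N. N \<in> Ni G \<Longrightarrow> set_inv (x N) <#> x N = N"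
      using normal.rcosets_inv_mult_group_eq[OF Ni_normal PNi_rcos[OF x]] by blast
    show ?thesis unfolding mult_PNi one_PNi y_def by (rule ext) (simp add: h)
  qed
  ultimately show "\<exists>y\<in>carrier (PNi G). y \<otimes>\<^bsub>PNi G\<^esub> x = \<one>\<^bsub>PNi G\<^esub>" by blast
qed

definition iota :: "'a \<Rightarrow> 'a set \<Rightarrow> 'a set" where
  "iota g = (\<lambda>N\<in>Ni G. N #> g)"

lemma iota_carrier: "g \<in> carrier G \<Longrightarrow> iota g \<in> carrier (PNi G)"
proof -
  assume g: "g \<in> carrier G"
  have "\<And>N. N \<in> Ni G \<Longrightarrow> N #> g \<in> rcosets N"
    using rcosetsI[OF subgroup.subset[OF Ni_subgroup] g] by blast
  then show ?thesis unfolding iota_def carrier_PNi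
    by (auto intro: r_coset_mono[THEN subsetD])
qed

lemma iota_hom: "group_hom G (PNi G) iota"
proof -
  have "iota \<in> hom G (PNi G)"
    unfolding hom_def
  proof (intro CollectI conjI ballI)
    show "iota \<in> carrier G \<rightarrow> carrier (PNi G)" using iota_carrier by blast
    fix g h assume gh: "g \<in> carrier G" "h \<in> carrier G"
    have e: "\<And>N. N \<in> Ni G \<Longrightarrow> (N #> g) <#> (N #> h) = N #> (g \<otimes> h)"
      using normal.rcos_sum[OF Ni_normal gh] by blast
    show "iota (g \<otimes> h) = iota g \<otimes>\<^bsub>PNi G\<^esub> iota h"
      unfolding iota_def mult_PNi by (rule ext) (simp add: e)
  qed
  then show ?thesis
    by (simp add: group_hom_def group_hom_axioms_def is_group PNi_group)
qed

lemma proj_hom: assumes K: "K \<in> Ni G" shows "group_hom (PNi G) (G Mod K) (\<lambda>x. x K)"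
proof -
  have "(\<lambda>x. x K) \<in> hom (PNi G) (G Mod K)"
    unfolding hom_def
  proof (intro CollectI conjI ballI)
    show "(\<lambda>x. x K) \<in> carrier (PNi G) \<rightarrow> carrier (G Mod K)"
      using PNi_rcos K by (simp add: FactGroup_def)
    fix x y show "(x \<otimes>\<^bsub>PNi G\<^esub> y) K = x K \<otimes>\<^bsub>G Mod K\<^esub> y K"
      using K by (simp add: mult_PNi)
  qed
  then show ?thesis
    by (simp add: group_hom_def group_hom_axioms_def PNi_group normal.factorgroup_is_group Ni_normal K)
qed

lemma proj_surj: assumes K: "K \<in> Ni G" shows "(\<lambda>x. x K) ` carrier (PNi G) = carrier (G Mod K)"
proof
  show "(\<lambda>x. x K) ` carrier (PNi G) \<subseteq> carrier (G Mod K)"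
    using PNi_rcos K by (force simp: FactGroup_def)
  show "carrier (G Mod K) \<subseteq> (\<lambda>x. x K) ` carrier (PNi G)"
  proof
    fix Y assume "Y \<in> carrier (G Mod K)"
    then obtain g where g: "g \<in> carrier G" "Y = K #> g" by (auto simp: FactGroup_def RCOSETS_def)
    then have "Y = iota g K" using K by (simp add: iota_def)
    then show "Y \<in> (\<lambda>x. x K) ` carrier (PNi G)" using iota_carrier[OF g(1)] by blast
  qed
qed

end


context group begin

lemma topspace_T: "topspace (PNi_topology G) = carrier (PNi G)"
  unfolding PNi_topology_def topspace_subtopology topspace_product_topology
  by (auto simp: carrier_PNi)

lemma proj_cont: assumes K: "K \<in> Ni G"
  shows "continuous_map (PNi_topology G) (discrete_topology (rcosets K)) (\<lambda>x. x K)"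
proof -
  have "continuous_map (product_topology (\<lambda>N. discrete_topology (rcosets N)) (Ni G))
          ((\<lambda>N. discrete_topology (rcosets N)) K) (\<lambda>x. x K)"
    by (rule continuous_map_product_projection[OF K])
  then show ?thesis unfolding PNi_topology_def
    by (simp add: continuous_map_from_subtopology)
qed

lemma Kset_closed: assumes K: "K \<in> Ni G"
  shows "closedin (PNi_topology G) {x \<in> carrier (PNi G). x K = K}"
proof -
  have "K \<in> rcosets K" using Ni_subgroup[OF K] subgroup.subgroup_in_rcosets is_group by blast
  then have "closedin (discrete_topology (rcosets K)) {K}" by simp
  from closedin_continuous_map_preimage[OF proj_cont[OF K] this]
  show ?thesis by (simp add: topspace_T)
qed

lemma nbhd:
  assumes U: "openin (PNi_topology G) U" and x: "x \<in> U"
  shows "\<exists>m\<ge>j. \<forall>y\<in>carrier (PNi G). y (lower_central G m) = x (lower_central G m) \<longrightarrow> y \<in> U"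
proof -
  obtain V where V: "openin (product_topology (\<lambda>N. discrete_topology (rcosets N)) (Ni G)) V"
    and UV: "U = V \<inter> carrier (PNi G)"
    using U unfolding PNi_topology_def openin_subtopology by blast
  have xV: "x \<in> V" and xc: "x \<in> carrier (PNi G)" using x UV by auto
  have "\<forall>x \<in> V. \<exists>W. finite {N \<in> Ni G. W N \<noteq> topspace (discrete_topology (rcosets N))} \<and>
                 (\<forall>N \<in> Ni G. openin (discrete_topology (rcosets N)) (W N)) \<and> x \<in> Pi\<^sub>E (Ni G) W \<and> Pi\<^sub>E (Ni G) W \<subseteq> V"
    using V unfolding openin_product_topology_alt .
  then obtain W where Wfin: "finite {N \<in> Ni G. W N \<noteq> topspace (discrete_topology (rcosets N))}"
    and Wx: "x \<in> Pi\<^sub>E (Ni G) W" and WV: "Pi\<^sub>E (Ni G) W \<subseteq> V"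
    using xV by meson
  define F where "F = {N \<in> Ni G. W N \<noteq> rcosets N}"
  have "finite F" using Wfin unfolding F_def by simp
  moreover have "F \<subseteq> Ni G" unfolding F_def by blast
  ultimately obtain m where m: "m \<ge> j" "\<forall>N\<in>F. lower_central G m \<subseteq> N"
    using Ni_finite_bound[of F j] by blast
  have "y \<in> U" if y: "y \<in> carrier (PNi G)" "y (lower_central G m) = x (lower_central G m)" for y
  proof -
    have "y \<in> Pi\<^sub>E (Ni G) W"
    proof (rule PiE_I)
      fix N assume N: "N \<in> Ni G"
      show "y N \<in> W N"
      proof (cases "N \<in> F")
        case False
        then show ?thesis using PNi_rcos[OF y(1) N] N unfolding F_def by auto
      next
        case True
        have Lm: "lower_central G m \<in> Ni G" by (rule lc_in_Ni)
        obtain g where g: "g \<in> carrier G" "x (lower_central G m) = lower_central G m #> g"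
          using PNi_rep[OF xc Lm] by blast
        have sN: "lower_central G m \<subseteq> N" using m(2) True by blast
        have "x N = N #> g" using PNi_det[OF xc Lm N sN g] .
        moreover have "y N = N #> g" using PNi_det[OF y(1) Lm N sN g(1)] g(2) y(2) by simp
        ultimately show ?thesis using Wx N by (auto simp: PiE_iff)
      qed
    next
      fix N assume "N \<notin> Ni G" then show "y N = undefined" using PNi_out[OF y(1)] by simp
    qed
    then have "y \<in> V" using WV by (rule rev_subsetD)
    then show ?thesis using UV y(1) by simp
  qed
  then show ?thesis using m(1) by blast
qed

lemma commutators_mono:
  "A \<subseteq> A' \<Longrightarrow> B \<subseteq> B' \<Longrightarrow> commutators H A B \<subseteq> commutators H A' B'"
  unfolding commutators_def by blast

lemma closed_lc_carrier:
  "closed_lower_central (PNi G) (PNi_topology G) k \<subseteq> carrier (PNi G)"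
proof (cases k)
  case (Suc k') then show ?thesis
    by (cases k') (auto simp: closure_of_subset_topspace[of "PNi_topology G", unfolded topspace_T])
qed simp

lemma iota_lc_gen:
  assumes IH: "iota ` lower_central G (Suc l) \<subseteq> closed_lower_central (PNi G) (PNi_topology G) (Suc l)"
  shows "iota ` lower_central G (Suc (Suc l)) \<subseteq>
     generate (PNi G) (commutators (PNi G) (carrier (PNi G))
        (closed_lower_central (PNi G) (PNi_topology G) (Suc l)))"
proof -
  interpret ih: group_hom G "PNi G" iota by (rule iota_hom)
  have sub: "lower_central G (Suc l) \<subseteq> carrier G"
    using normal.axioms(1)[OF lc_normal] subgroup.subset by blast
  have csub: "commutators G (carrier G) (lower_central G (Suc l)) \<subseteq> carrier G"
    using commutators_subset sub by blast
  have "iota ` lower_central G (Suc (Suc l)) =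
          generate (PNi G) (iota ` commutators G (carrier G) (lower_central G (Suc l)))"
    unfolding lc_Suc_Suc using ih.generate_img[OF csub] by simp
  also have "\<dots> = generate (PNi G) (commutators (PNi G) (iota ` carrier G) (iota ` lower_central G (Suc l)))"
    using hom_commutators[OF iota_hom _ sub] by simp
  also have "\<dots> \<subseteq> generate (PNi G) (commutators (PNi G) (carrier (PNi G))
        (closed_lower_central (PNi G) (PNi_topology G) (Suc l)))"
    apply (rule group.mono_generate[OF PNi_group])
    apply (rule commutators_mono)
    using iota_carrier IH by blast+
  finally show ?thesis .
qed

lemma iota_lc: "iota ` lower_central G k \<subseteq> closed_lower_central (PNi G) (PNi_topology G) k"
proof (induction k rule: nat_less_induct)
  case (1 k)
  show ?case
  proof (cases k)
    case 0 then show ?thesis using iota_carrier by auto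
  next
    case (Suc k') note kk = Suc
    show ?thesis
    proof (cases k')
      case 0 then show ?thesis using iota_carrier kk by auto
    next
      case (Suc l)
      have IH: "iota ` lower_central G (Suc l) \<subseteq> closed_lower_central (PNi G) (PNi_topology G) (Suc l)"
        using 1 kk Suc by simp
      have "generate (PNi G) (commutators (PNi G) (carrier (PNi G))
        (closed_lower_central (PNi G) (PNi_topology G) (Suc l))) \<subseteq> carrier (PNi G)"
        using group.generate_in_carrier[OF PNi_group]
          group.commutators_subset[OF PNi_group order_refl closed_lc_carrier] by blast
      then have "generate (PNi G) (commutators (PNi G) (carrier (PNi G))
        (closed_lower_central (PNi G) (PNi_topology G) (Suc l))) \<subseteq> PNi_topology G closure_of generate (PNi G) (commutators (PNi G) (carrier (PNi G))
        (closed_lower_central (PNi G) (PNi_topology G) (Suc l)))"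
        by (intro closure_of_subset) (simp add: topspace_T)
      then show ?thesis unfolding kk Suc closed_lower_central.simps
        using iota_lc_gen[OF IH] by (rule_tac subset_trans) assumption+
    qed
  qed
qed

end


context group begin

lemma lc_sub_carrier: "lower_central G n \<subseteq> carrier G"
  using normal.axioms(1)[OF lc_normal] subgroup.subset by blast

lemma closed_lc_sub_K:
  "closed_lower_central (PNi G) (PNi_topology G) (Suc n)
     \<subseteq> {x \<in> carrier (PNi G). x (lower_central G (Suc n)) = lower_central G (Suc n)}"
proof (induction n)
  case 0
  have "x (carrier G) = carrier G" if x: "x \<in> carrier (PNi G)" for x
  proof -
    have cN: "carrier G \<in> Ni G" using lc_in_Ni[of 0] by simp
    obtain g where g: "g \<in> carrier G" "x (carrier G) = carrier G #> g" using PNi_rep[OF x cN] by blast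
    then show ?thesis using coset_join2[OF g(1) subgroup_self g(1)] by simp
  qed
  then show ?case by auto
next
  case (Suc n)
  let ?K = "lower_central G (Suc (Suc n))"
  let ?L = "lower_central G (Suc n)"
  let ?C = "closed_lower_central (PNi G) (PNi_topology G) (Suc n)"
  have KN: "?K \<in> Ni G" and LN: "?L \<in> Ni G" by (rule lc_in_Ni)+
  interpret pi: group_hom "PNi G" "G Mod ?K" "\<lambda>x. x ?K" by (rule proj_hom[OF KN])
  have kerK: "kernel (PNi G) (G Mod ?K) (\<lambda>x. x ?K) = {x \<in> carrier (PNi G). x ?K = ?K}"
    by (simp add: kernel_def)
  have comm_sub: "commutators (PNi G) (carrier (PNi G)) ?C \<subseteq> {x \<in> carrier (PNi G). x ?K = ?K}"
  proof
    fix z assume "z \<in> commutators (PNi G) (carrier (PNi G)) ?C"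
    then obtain g c where gc: "g \<in> carrier (PNi G)" "c \<in> ?C" "z = commutator (PNi G) g c"
      unfolding commutators_def by blast
    have c: "c \<in> carrier (PNi G)" "c ?L = ?L" using gc(2) Suc.IH by blast+
    have zc: "z \<in> carrier (PNi G)" using gc c group.commutator_closed[OF PNi_group] by simp
    obtain a where a: "a \<in> carrier G" "g ?K = ?K #> a" using PNi_rep[OF gc(1) KN] by blast
    obtain b where b: "b \<in> carrier G" "c ?K = ?K #> b" using PNi_rep[OF c(1) KN] by blast
    have "c ?L = ?L #> b" using PNi_det[OF c(1) KN LN lc_Suc_subset b] .
    then have bL: "b \<in> ?L" using rcos_self[OF b(1) Ni_subgroup[OF LN]] c(2) by simp
    have "z ?K = commutator (G Mod ?K) (g ?K) (c ?K)"
      using hom_commutator[OF proj_hom[OF KN] gc(1) c(1)] gc(3) by simp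
    also have "\<dots> = ?K #> commutator G a b"
      using hom_commutator[OF quot_hom[OF lc_normal[of "Suc (Suc n)"]] a(1) b(1)] a(2) b(2)
      by (simp del: lower_central.simps)
    also have "\<dots> = ?K"
    proof -
      have "commutator G a b \<in> commutators G (carrier G) ?L" using a(1) bL unfolding commutators_def by blast
      then have "commutator G a b \<in> ?K" unfolding lc_Suc_Suc by (rule generate.incl)
      then show ?thesis using coset_join2[OF _ Ni_subgroup[OF KN]] lc_sub_carrier by blast
    qed
    finally show "z \<in> {x \<in> carrier (PNi G). x ?K = ?K}" using zc by simp
  qed
  have "generate (PNi G) (commutators (PNi G) (carrier (PNi G)) ?C) \<subseteq> {x \<in> carrier (PNi G). x ?K = ?K}"
    using group.generate_subgroup_incl[OF PNi_group comm_sub] pi.subgroup_kernel kerK by simp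
  then show ?case
    unfolding closed_lower_central.simps
    by (rule closure_of_minimal[OF _ Kset_closed[OF KN]])
qed

lemma K_sub_closed_lc:
  "{x \<in> carrier (PNi G). x (lower_central G (Suc n)) = lower_central G (Suc n)}
     \<subseteq> closed_lower_central (PNi G) (PNi_topology G) (Suc n)"
proof (cases n)
  case 0 then show ?thesis by auto
next
  case (Suc l)
  let ?j = "Suc (Suc l)"
  let ?S = "generate (PNi G) (commutators (PNi G) (carrier (PNi G))
        (closed_lower_central (PNi G) (PNi_topology G) (Suc l)))"
  have iS: "iota ` lower_central G ?j \<subseteq> ?S"
    by (rule iota_lc_gen[OF iota_lc])
  show ?thesis unfolding Suc closed_lower_central.simps
  proof
    fix x assume x: "x \<in> {x \<in> carrier (PNi G). x (lower_central G ?j) = lower_central G ?j}"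
    then have xc: "x \<in> carrier (PNi G)" and xj: "x (lower_central G ?j) = lower_central G ?j" by auto
    show "x \<in> PNi_topology G closure_of ?S"
      unfolding in_closure_of
    proof (intro conjI allI impI)
      show "x \<in> topspace (PNi_topology G)" using xc topspace_T by simp
      fix U assume "x \<in> U \<and> openin (PNi_topology G) U"
      then have U: "x \<in> U" "openin (PNi_topology G) U" by auto
      obtain m where m: "m \<ge> ?j"
        "\<forall>y\<in>carrier (PNi G). y (lower_central G m) = x (lower_central G m) \<longrightarrow> y \<in> U"
        using nbhd[OF U(2) U(1), of ?j] by blast
      have Lm: "lower_central G m \<in> Ni G" and Lj: "lower_central G ?j \<in> Ni G" by (rule lc_in_Ni)+
      obtain g where g: "g \<in> carrier G" "x (lower_central G m) = lower_central G m #> g"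
        using PNi_rep[OF xc Lm] by blast
      have "x (lower_central G ?j) = lower_central G ?j #> g"
        using PNi_det[OF xc Lm Lj lc_antimono[OF m(1)] g] .
      then have gj: "g \<in> lower_central G ?j" using rcos_self[OF g(1) Ni_subgroup[OF Lj]] xj by simp
      have "iota g \<in> ?S" using iS gj by blast
      moreover have "iota g \<in> U"
        using m(2) iota_carrier[OF g(1)] g(2) Lm by (simp add: iota_def)
      ultimately show "\<exists>y. y \<in> ?S \<and> y \<in> U" by blast
    qed
  qed
qed

lemma closed_lc_eq:
  assumes "j \<ge> 1"
  shows "closed_lower_central (PNi G) (PNi_topology G) j
     = kernel (PNi G) (G Mod lower_central G j) (\<lambda>x. x (lower_central G j))"
proof -
  obtain n where j: "j = Suc n" using assms by (cases j) auto
  show ?thesis unfolding j kernel_def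
    using closed_lc_sub_K[of n] K_sub_closed_lc[of n] by auto
qed

lemma part1:
  assumes "j \<ge> 1"
  shows "(PNi G Mod closed_lower_central (PNi G) (PNi_topology G) j) \<cong> (G Mod lower_central G j)"
  unfolding closed_lc_eq[OF assms]
  by (rule group_hom.FactGroup_iso[OF proj_hom[OF lc_in_Ni] proj_surj[OF lc_in_Ni]])

end


context group begin

lemma part2: "metrizable_space (PNi_topology G)"
proof -
  define f where "f = (\<lambda>x::'a set \<Rightarrow> 'a set. \<lambda>m::nat. x (lower_central G m))"
  define Y where "Y = product_topology (\<lambda>m. discrete_topology (rcosets (lower_central G m))) (UNIV :: nat set)"
  let ?T = "PNi_topology G"
  let ?C = "carrier (PNi G)"
  have topY: "topspace Y = (\<Pi>\<^sub>E m\<in>UNIV. rcosets (lower_central G m))"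
    unfolding Y_def by simp
  have fY: "f ` ?C \<subseteq> topspace Y"
    unfolding topY f_def using PNi_rcos lc_in_Ni by (auto simp: PiE_iff)
  have contY: "continuous_map ?T Y f"
    unfolding Y_def continuous_map_componentwise_UNIV f_def
    using proj_cont[OF lc_in_Ni] by blast
  have cont: "continuous_map ?T (subtopology Y (f ` topspace ?T)) f"
    by (rule continuous_map_into_subtopology[OF contY]) blast
  have openm: "open_map ?T (subtopology Y (f ` topspace ?T)) f"
    unfolding open_map_def
  proof (intro allI impI)
    fix U assume U: "openin ?T U"
    have UC: "U \<subseteq> ?C" using openin_subset[OF U] topspace_T by simp
    show "openin (subtopology Y (f ` topspace ?T)) (f ` U)"
    proof (subst openin_subopen, intro ballI)
      fix z assume "z \<in> f ` U"
      then obtain x where x: "x \<in> U" "z = f x" by blast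
      obtain m where m: "\<forall>y\<in>?C. y (lower_central G m) = x (lower_central G m) \<longrightarrow> y \<in> U"
        using nbhd[OF U x(1), of 0] by blast
      define Ob where "Ob = {s \<in> topspace Y. s m \<in> {x (lower_central G m)}}"
      have xm: "x (lower_central G m) \<in> rcosets (lower_central G m)"
        using PNi_rcos[OF _ lc_in_Ni] x(1) UC by blast
      have "continuous_map Y ((\<lambda>m. discrete_topology (rcosets (lower_central G m))) m) (\<lambda>s. s m)"
        unfolding Y_def by (rule continuous_map_product_projection) simp
      then have "openin Y Ob"
        unfolding Ob_def using xm by (intro openin_continuous_map_preimage) auto
      then have Oo: "openin (subtopology Y (f ` topspace ?T)) (Ob \<inter> f ` topspace ?T)"
        unfolding openin_subtopology by blast
      have zO: "z \<in> Ob \<inter> f ` topspace ?T"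
        using x UC fY topspace_T unfolding Ob_def by (auto simp: f_def)
      have "Ob \<inter> f ` topspace ?T \<subseteq> f ` U"
      proof
        fix s assume "s \<in> Ob \<inter> f ` topspace ?T"
        then obtain y where y: "y \<in> ?C" "s = f y" "s m = x (lower_central G m)"
          unfolding Ob_def topspace_T by auto
        then have "y \<in> U" using m by (simp add: f_def)
        then show "s \<in> f ` U" using y(2) by blast
      qed
      then show "\<exists>T. openin (subtopology Y (f ` topspace ?T)) T \<and> z \<in> T \<and> T \<subseteq> f ` U"
        using Oo zO by blast
    qed
  qed
  have surj: "f ` topspace ?T = topspace (subtopology Y (f ` topspace ?T))"
    using fY topspace_T by auto
  have inj: "inj_on f (topspace ?T)"
  proof (rule inj_onI)
    fix x y assume x: "x \<in> topspace ?T" and y: "y \<in> topspace ?T" and fxy: "f x = f y"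
    have xc: "x \<in> ?C" and yc: "y \<in> ?C" using x y topspace_T by auto
    show "x = y"
    proof (rule ext)
      fix N show "x N = y N"
      proof (cases "N \<in> Ni G")
        case False then show ?thesis using PNi_out[OF xc] PNi_out[OF yc] by simp
      next
        case True
        obtain c where c: "lower_central G c \<subseteq> N" using Ni_contains_lc[OF True] by blast
        have Lc: "lower_central G c \<in> Ni G" by (rule lc_in_Ni)
        obtain g where g: "g \<in> carrier G" "x (lower_central G c) = lower_central G c #> g"
          using PNi_rep[OF xc Lc] by blast
        have g2: "y (lower_central G c) = lower_central G c #> g"
          using g(2) fxy unfolding f_def by (metis)
        show ?thesis using PNi_det[OF xc Lc True c g] PNi_det[OF yc Lc True c g(1) g2] by simp
      qed
    qed
  qed
  have "homeomorphic_map ?T (subtopology Y (f ` topspace ?T)) f"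
    by (rule bijective_open_imp_homeomorphic_map[OF cont openm surj inj])
  then have hs: "?T homeomorphic_space (subtopology Y (f ` topspace ?T))"
    by (rule homeomorphic_map_imp_homeomorphic_space)
  have "metrizable_space Y"
    unfolding Y_def metrizable_space_product_topology
    by (meson countableI_type countable_subset subset_UNIV metrizable_space_discrete_topology)
  then have "metrizable_space (subtopology Y (f ` topspace ?T))"
    by (rule metrizable_space_subtopology)
  then show ?thesis using homeomorphic_metrizable_space[OF hs] by simp
qed

end

theorem mainTheorem2:
  fixes \<Gamma> :: "('a, 'b) monoid_scheme"
  assumes "group \<Gamma>"
  shows "(\<forall>j\<ge>1. (PNi \<Gamma> Mod closed_lower_central (PNi \<Gamma>) (PNi_topology \<Gamma>) j)
                    \<cong> (\<Gamma> Mod lower_central \<Gamma> j))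
         \<and> metrizable_space (PNi_topology \<Gamma>)"
  using group.part1[OF assms] group.part2[OF assms] by blast



end
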